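(* Let $f:[0,1]\to[0,1]$ be a surjective continuous function that does not admit a splitting sequence. Then either (a) $f$ admits at least two fixed points, and if $d$ is the maximum and $e$ the minimum fixed point of $f$, then $(d,d,d,\dots)$ and $(e,e,e,\dots)$ are endpoints of $\varprojlim f$; or (b) $f$ admits a 2-cycle, and if $\{s,t\}$ is a 2-cycle such that for any other 2-cycle $\{u,v\}$ we have $s<u$, then $(s,t,s,t,\dots)$ and $(t,s,t,s,\dots)$ are endpoints of $\varprojlim f$.
   Context: For a continuous $f:[0,1]\to[0,1]$, $\varprojlim f=\{\mathbf x=(x_0,x_1,\dots)\in[0,1]^{\mathbb N}: f(x_{n+1})=x_n\ \forall n\}$ with the product topology; it is a continuum. A point $p$ of a continuum $X$ is an endpoint of $X$ if for any two subcontinua $A,B$ of $X$ containing $p$, either $A\subseteq B$ or $B\subseteq A$. A 2-cycle is a set $\{s,t\}$ with $s\neq t$, $f(s)=t$, $f(t)=s$. A sequence $(T_n)_{n\in\mathbb N}$ of closed intervals $T_n\subsetneq[0,1]$ (possibly degenerate) is tight if $f(T_{n+1})=T_n$ for every $n$ and $T_n$ is nondegenerate for all sufficiently large $n$. A tight sequence $(T_n)$, $T_n=[l_n,r_n]$, is a splitting sequence admitted by $f$ if there are an infinite $N\subseteq\mathbb N$ and nondegenerate closed intervals $S_n\subseteq[0,1]$ ($n\in N$) with $S_n\cap T_n\subseteq\{l_n,r_n\}$ and $f(S_n)=f(T_n)$ for all $n\in N$. *)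

theory Defs
  imports "HOL-Analysis.Analysis"
begin

text \<open>Sequences in [0,1]^N are functions nat => real; the topology on nat => real
 is the product topology (instance from HOL-Analysis Function_Topology).\<close>

definition inv_lim :: "(real \<Rightarrow> real) \<Rightarrow> (nat \<Rightarrow> real) set" where
  "inv_lim f = {x. (\<forall>n. x n \<in> {0..1}) \<and> (\<forall>n. f (x (Suc n)) = x n)}"

definition subcontinuum :: "'a::topological_space set \<Rightarrow> 'a set \<Rightarrow> bool" where
  "subcontinuum A X \<longleftrightarrow> A \<subseteq> X \<and> A \<noteq> {} \<and> compact A \<and> connected A"

definition endpoint :: "'a::topological_space set \<Rightarrow> 'a \<Rightarrow> bool" where
  "endpoint X p \<longleftrightarrow> p \<in> X \<and>
     (\<forall>A B. subcontinuum A X \<longrightarrow> subcontinuum B X \<longrightarrow> p \<in> A \<longrightarrow> p \<in> B \<longrightarrow>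
        A \<subseteq> B \<or> B \<subseteq> A)"

definition two_cycle :: "(real \<Rightarrow> real) \<Rightarrow> real \<Rightarrow> real \<Rightarrow> bool" where
  "two_cycle f s t \<longleftrightarrow> s \<in> {0..1} \<and> t \<in> {0..1} \<and> s \<noteq> t \<and> f s = t \<and> f t = s"

definition tight :: "(real \<Rightarrow> real) \<Rightarrow> (nat \<Rightarrow> real) \<Rightarrow> (nat \<Rightarrow> real) \<Rightarrow> bool" where
  "tight f l r \<longleftrightarrow>
     (\<forall>n. 0 \<le> l n \<and> l n \<le> r n \<and> r n \<le> 1 \<and> {l n..r n} \<noteq> {0..1}) \<and>
     (\<forall>n. f ` {l (Suc n)..r (Suc n)} = {l n..r n}) \<and>
     (\<exists>m. \<forall>n\<ge>m. l n < r n)"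

definition splitting_seq :: "(real \<Rightarrow> real) \<Rightarrow> (nat \<Rightarrow> real) \<Rightarrow> (nat \<Rightarrow> real) \<Rightarrow> bool" where
  "splitting_seq f l r \<longleftrightarrow> tight f l r \<and>
     (\<exists>N :: nat set. \<exists>a b :: nat \<Rightarrow> real. infinite N \<and>
        (\<forall>n\<in>N. 0 \<le> a n \<and> a n < b n \<and> b n \<le> 1 \<and>
           {a n..b n} \<inter> {l n..r n} \<subseteq> {l n, r n} \<and>
           f ` {a n..b n} = f ` {l n..r n}))"

definition admits_splitting :: "(real \<Rightarrow> real) \<Rightarrow> bool" where
  "admits_splitting f \<longleftrightarrow> (\<exists>l r. splitting_seq f l r)"

end

theory Submission
  imports Defs
begin

definition proj :: "(nat \<Rightarrow> real) set \<Rightarrow> nat \<Rightarrow> real set" where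
  "proj A n = (\<lambda>x. x n) ` A"

lemma inv_lim_agree_aux:
  assumes "x \<in> inv_lim f" "y \<in> inv_lim f"
  shows "x (i + k) = y (i + k) \<Longrightarrow> x i = y i"
proof (induction k arbitrary: i)
  case 0 then show ?case by simp
next
  case (Suc k)
  have "x (Suc i + k) = y (Suc i + k)" using Suc.prems by simp
  then have "x (Suc i) = y (Suc i)" by (rule Suc.IH)
  moreover have "f (x (Suc i)) = x i" "f (y (Suc i)) = y i"
    using assms unfolding inv_lim_def by auto
  ultimately show ?case by simp
qed

lemma inv_lim_agree:
  assumes "x \<in> inv_lim f" "y \<in> inv_lim f" "x n = y n" "i \<le> n"
  shows "x i = y i"
proof -
  have "i + (n - i) = n" using assms(4) by simp
  then show ?thesis using inv_lim_agree_aux[OF assms(1,2), of i "n - i"] assms(3) by metis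
qed

lemma subset_from_proj:
  assumes B: "B \<subseteq> inv_lim f" "compact B" and x: "x \<in> inv_lim f"
    and xp: "\<And>n. x n \<in> proj B n"
  shows "x \<in> B"
proof (rule ccontr)
  assume "x \<notin> B"
  have "closed B" using B(2) by (rule compact_imp_closed)
  then have "open (- B)" by auto
  then have "openin (product_topology (\<lambda>i. euclidean) UNIV) (- B)" unfolding open_fun_def .
  moreover have "x \<in> - B" using \<open>x \<notin> B\<close> by simp
  ultimately have "\<exists>X. x \<in> (\<Pi>\<^sub>E i\<in>UNIV. X i) \<and> (\<forall>i. openin euclidean (X i)) \<and> finite {i. X i \<noteq> topspace euclidean} \<and> (\<Pi>\<^sub>E i\<in>UNIV. X i) \<subseteq> - B"
    by (rule product_topology_open_contains_basis)
  then obtain X where H: "x \<in> (\<Pi>\<^sub>E i\<in>UNIV. X i)" "finite {i. X i \<noteq> topspace euclidean}"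
      "(\<Pi>\<^sub>E i\<in>UNIV. X i) \<subseteq> - B"
    by blast
  from finite_nat_bounded[OF H(2)] obtain n where n0: "{i. X i \<noteq> topspace euclidean} \<subseteq> {..<n}"
    by (elim exE)
  have n: "i < n" if "X i \<noteq> UNIV" for i using n0 that by auto
  obtain y where y: "y \<in> B" "y n = x n"
  proof -
    from xp[of n] obtain y where "y \<in> B" "x n = y n" unfolding proj_def by (rule imageE)
    then show ?thesis using that by simp
  qed
  have "y \<in> (\<Pi>\<^sub>E i\<in>UNIV. X i)"
  proof -
    have "y i \<in> X i" for i
    proof (cases "X i = UNIV")
      case False
      then have "i < n" using n by auto
      then have "y i = x i" using inv_lim_agree[of y f x n i] y B(1) x by auto
      then show ?thesis using H(1) by (simp add: PiE_iff)
    qed simp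
    then show ?thesis by (simp add: PiE_iff)
  qed
  then show False using H(3) y(1) by auto
qed

lemma proj_step:
  assumes "A \<subseteq> inv_lim f"
  shows "f ` proj A (Suc n) = proj A n"
proof -
  have "f ` proj A (Suc n) = (\<lambda>x. f (x (Suc n))) ` A" unfolding proj_def by (simp add: image_image)
  also have "\<dots> = (\<lambda>x. x n) ` A"
    using assms unfolding inv_lim_def by (intro image_cong) auto
  finally show ?thesis unfolding proj_def .
qed

lemma proj_interval:
  assumes "subcontinuum A (inv_lim f)"
  shows "\<exists>a b. proj A n = {a..b} \<and> 0 \<le> a \<and> a \<le> b \<and> b \<le> 1"
proof -
  have A: "A \<subseteq> inv_lim f" "A \<noteq> {}" "compact A" "connected A"
    using assms unfolding subcontinuum_def by auto
  have c: "continuous_on A (\<lambda>x. x n::real)"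
    by (rule continuous_on_subset[OF continuous_on_product_coordinates]) simp
  have "compact (proj A n)" unfolding proj_def using compact_continuous_image[OF c A(3)] .
  moreover have "connected (proj A n)" unfolding proj_def using connected_continuous_image[OF c A(4)] .
  ultimately have "\<exists>a b. proj A n = {a..b}" using connected_compact_interval_1[of "proj A n"] by simp
  then obtain a b where ab: "proj A n = {a..b}" by (elim exE)
  have ne: "proj A n \<noteq> {}" using A(2) unfolding proj_def by simp
  have sub: "proj A n \<subseteq> {0..1}" using A(1) unfolding proj_def inv_lim_def by auto
  have "a \<le> b" using ne ab by simp
  then have "a \<in> {0..1}" "b \<in> {0..1}" using sub ab by auto
  then show ?thesis using ab \<open>a \<le> b\<close> by auto
qed

lemma proj_down:
  assumes "A \<subseteq> inv_lim f" "B \<subseteq> inv_lim f" "proj A (k + j) \<subseteq> proj B (k + j)"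
  shows "proj A k \<subseteq> proj B k"
  using assms(3)
proof (induction j arbitrary: k)
  case 0 then show ?case by simp
next
  case (Suc j)
  have "proj A (Suc k) \<subseteq> proj B (Suc k)" using Suc.IH[of "Suc k"] Suc.prems by simp
  then have "f ` proj A (Suc k) \<subseteq> f ` proj B (Suc k)" by (rule image_mono)
  then show ?case using proj_step[OF assms(1)] proj_step[OF assms(2)] by simp
qed

lemma exact_sub_aux:
  fixes f :: "real \<Rightarrow> real"
  assumes cont: "continuous_on {x..y} f" and xy: "x \<le> y" and fx: "f x = c" and fy: "f y = d"
    and cd: "c < d"
  shows "\<exists>a b. x \<le> a \<and> a < b \<and> b \<le> y \<and> f ` {a..b} = {c..d}"
proof -
  define K where "K = {t \<in> {x..y}. f t = d}"
  have Kc: "closed K" unfolding K_def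
    by (rule continuous_closed_preimage_constant[OF cont]) simp
  have yK: "y \<in> K" using xy fy by (simp add: K_def)
  have Kb: "bdd_below K" unfolding K_def by (rule bdd_belowI[of _ x]) simp
  define y' where "y' = Inf K"
  have y'K: "y' \<in> K" unfolding y'_def using closed_contains_Inf[of K] Kc Kb yK by blast
  have y'le: "y' \<le> t" if "t \<in> K" for t unfolding y'_def by (rule cInf_lower[OF that Kb])
  have y'1: "x \<le> y'" "y' \<le> y" "f y' = d" using y'K by (auto simp: K_def)
  define K' where "K' = {t \<in> {x..y'}. f t = c}"
  have cont': "continuous_on {x..y'} f" by (rule continuous_on_subset[OF cont]) (use y'1 in auto)
  have K'c: "closed K'" unfolding K'_def
    by (rule continuous_closed_preimage_constant[OF cont']) simp
  have xK': "x \<in> K'" using y'1 fx by (simp add: K'_def)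
  have K'b: "bdd_above K'" unfolding K'_def by (rule bdd_aboveI[of _ y']) simp
  define x' where "x' = Sup K'"
  have x'K: "x' \<in> K'" unfolding x'_def using closed_contains_Sup[of K'] K'c K'b xK' by blast
  have x'le: "t \<le> x'" if "t \<in> K'" for t unfolding x'_def by (rule cSup_upper[OF that K'b])
  have x'1: "x \<le> x'" "x' \<le> y'" "f x' = c" using x'K by (auto simp: K'_def)
  have "x' \<noteq> y'" using x'1 y'1 cd by auto
  then have lt: "x' < y'" using x'1 by simp
  have cont'': "continuous_on {x'..y'} f" by (rule continuous_on_subset[OF cont]) (use x'1 y'1 in auto)
  have "f ` {x'..y'} = {c..d}"
  proof
    show "{c..d} \<subseteq> f ` {x'..y'}"
    proof
      fix v assume v: "v \<in> {c..d}"
      obtain s where "x' \<le> s" "s \<le> y'" "f s = v"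
        using IVT'[of f x' v y', OF _ _ _ cont''] v x'1 y'1 lt by auto
      then show "v \<in> f ` {x'..y'}" by auto
    qed
  next
    show "f ` {x'..y'} \<subseteq> {c..d}"
    proof
      fix v assume "v \<in> f ` {x'..y'}"
      then obtain t where t: "t \<in> {x'..y'}" "v = f t" by auto
      have "c \<le> f t"
      proof (rule ccontr)
        assume "\<not> c \<le> f t"
        then have ft: "f t < c" by simp
        have ct: "continuous_on {t..y'} f" by (rule continuous_on_subset[OF cont'']) (use t in auto)
        obtain s where s: "t \<le> s" "s \<le> y'" "f s = c"
          using IVT'[of f t c y', OF _ _ _ ct] ft y'1 cd t by auto
        have "s \<in> K'" using s t x'1 by (simp add: K'_def)
        then have "s \<le> x'" by (rule x'le)
        then have "s = t" using s t by simp
        then show False using s ft by simp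
      qed
      moreover have "f t \<le> d"
      proof (rule ccontr)
        assume "\<not> f t \<le> d"
        then have ft: "d < f t" by simp
        have ct: "continuous_on {x'..t} f" by (rule continuous_on_subset[OF cont'']) (use t in auto)
        obtain s where s: "x' \<le> s" "s \<le> t" "f s = d"
          using IVT'[of f x' d t, OF _ _ _ ct] ft x'1 cd t by auto
        have "s \<in> K" using s t x'1 y'1 by (simp add: K_def)
        then have "y' \<le> s" by (rule y'le)
        then have "s = t" using s t by simp
        then show False using s ft by simp
      qed
      ultimately show "v \<in> {c..d}" using t by simp
    qed
  qed
  then show ?thesis using x'1 y'1 lt by blast
qed

lemma exact_sub:
  fixes f :: "real \<Rightarrow> real"
  assumes cont: "continuous_on {y0..y1} f" and y01: "y0 \<le> y1" and cd: "c < d"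
    and sub: "{c..d} \<subseteq> f ` {y0..y1}"
  shows "\<exists>a b. y0 \<le> a \<and> a < b \<and> b \<le> y1 \<and> f ` {a..b} = {c..d}"
proof -
  have "c \<in> f ` {y0..y1}" "d \<in> f ` {y0..y1}" using sub cd by auto
  then obtain x y where x: "x \<in> {y0..y1}" "f x = c" and y: "y \<in> {y0..y1}" "f y = d"
    by (auto simp del: atLeastAtMost_iff)
  show ?thesis
  proof (cases "x \<le> y")
    case True
    have ct: "continuous_on {x..y} f" by (rule continuous_on_subset[OF cont]) (use x y in auto)
    obtain a b where ab: "x \<le> a" "a < b" "b \<le> y" "f ` {a..b} = {c..d}"
      using exact_sub_aux[OF ct True x(2) y(2) cd] by blast
    then show ?thesis using x y by (intro exI[of _ a] exI[of _ b]) auto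
  next
    case False
    then have yx: "y \<le> x" by simp
    define g where "g = (\<lambda>t. - f t)"
    have ct: "continuous_on {y..x} g" unfolding g_def
      by (intro continuous_on_minus continuous_on_subset[OF cont]) (use x y in auto)
    have "g y = - d" "g x = - c" "- d < - c" using x y cd by (auto simp: g_def)
    then obtain a b where ab: "y \<le> a" "a < b" "b \<le> x" "g ` {a..b} = {-d..-c}"
      using exact_sub_aux[OF ct yx] by blast
    have "f ` {a..b} = {c..d}"
    proof
      show "f ` {a..b} \<subseteq> {c..d}"
      proof
        fix v assume "v \<in> f ` {a..b}"
        then obtain t where t: "t \<in> {a..b}" "v = f t" by auto
        then have "g t \<in> {-d..-c}" using ab(4) by blast
        then show "v \<in> {c..d}" using t by (simp add: g_def)
      qed
    next
      show "{c..d} \<subseteq> f ` {a..b}"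
      proof
        fix v assume "v \<in> {c..d}"
        then have "- v \<in> g ` {a..b}" using ab(4) by simp
        then obtain t where t: "t \<in> {a..b}" "- v = g t" by auto
        then have "v = f t" by (simp add: g_def)
        then show "v \<in> f ` {a..b}" using t by auto
      qed
    qed
    then show ?thesis using ab x y by (intro exI[of _ a] exI[of _ b]) auto
  qed
qed

lemma improper_down:
  assumes onto: "f ` {0..1} = {0..1}"
    and img: "\<And>n. f ` {l (Suc n)..r (Suc n)} = {l n..r n}"
  shows "{l (k + j)..r (k + j)} = {0..1::real} \<Longrightarrow> {l k..r k} = {0..1}"
proof (induction j arbitrary: k)
  case 0 then show ?case by simp
next
  case (Suc j)
  have "{l (Suc k)..r (Suc k)} = {0..1}" using Suc.IH[of "Suc k"] Suc.prems by simp
  then show ?case using img[of k] onto by simp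
qed

lemma three_pts:
  fixes a b :: real
  assumes "0 \<in> {a, b}" "1/2 \<in> {a, b}" "1 \<in> {a, b}"
  shows False
  using assms by auto

lemma core:
  fixes f :: "real \<Rightarrow> real" and l r :: "nat \<Rightarrow> real"
  assumes cont: "continuous_on {0..1} f" and onto: "f ` {0..1} = {0..1}"
    and nosplit: "\<not> admits_splitting f"
    and bnd: "\<And>n. 0 \<le> l n \<and> l n \<le> r n \<and> r n \<le> 1"
    and img: "\<And>n. f ` {l (Suc n)..r (Suc n)} = {l n..r n}"
    and nd: "\<And>n. m \<le> n \<Longrightarrow> l n < r n"
  shows "finite {n. \<exists>y0 y1. 0 \<le> y0 \<and> y0 \<le> y1 \<and> y1 \<le> 1 \<and>
            {y0..y1} \<inter> {l n..r n} \<subseteq> {l n, r n} \<and> {0..1} \<subseteq> f ` {y0..y1}}"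
    (is "finite ?Bad")
proof (rule ccontr)
  assume inf: "infinite ?Bad"
  have proper: "{l n..r n} \<noteq> {0..1}" if "n \<in> ?Bad" for n
  proof
    assume eq: "{l n..r n} = {0..1}"
    from that obtain y0 y1 where y: "0 \<le> y0" "y0 \<le> y1" "y1 \<le> 1"
      "{y0..y1} \<inter> {l n..r n} \<subseteq> {l n, r n}" "{0..1} \<subseteq> f ` {y0..y1}" by blast
    have "l n \<in> {l n..r n}" "r n \<in> {l n..r n}" using bnd[of n] by auto
    moreover have "0 \<in> {l n..r n}" "1 \<in> {l n..r n}" using eq by auto
    ultimately have ln: "l n = 0" "r n = 1" using eq by (auto simp del: atLeastAtMost_iff simp: atLeastAtMost_iff[of 0 "l n"])
    have "{y0..y1} \<subseteq> {0, 1}" using y(1-4) ln by auto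
    then have "f ` {y0..y1} \<subseteq> {f 0, f 1}" by auto
    then have "{0..1} \<subseteq> {f 0, f 1}" using y(5) by simp
    moreover have "(0::real) \<in> {0..1}" "(1/2::real) \<in> {0..1}" "(1::real) \<in> {0..1}" by auto
    ultimately have "(0::real) \<in> {f 0, f 1}" "(1/2::real) \<in> {f 0, f 1}" "(1::real) \<in> {f 0, f 1}"
      by (meson subsetD)+
    then show False by (rule three_pts)
  qed
  have "?Bad \<noteq> {}"
  proof
    assume "?Bad = {}"
    then have "finite ?Bad" by (simp only: finite.emptyI)
    with inf show False by contradiction
  qed
  then obtain n0 where n0: "n0 \<in> ?Bad" by blast
  have proper2: "{l k..r k} \<noteq> {0..1}" if "n0 \<le> k" for k
  proof
    assume "{l k..r k} = {0..1}"
    then have "{l (n0 + (k - n0))..r (n0 + (k - n0))} = {0..1}" using that by simp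
    then have "{l n0..r n0} = {0..1}" by (rule improper_down[of f l r, OF onto img])
    then show False using proper[OF n0] by simp
  qed
  define N where "N = max n0 m"
  define l' where "l' j = l (j + N)" for j
  define r' where "r' j = r (j + N)" for j
  have img': "f ` {l' (Suc j)..r' (Suc j)} = {l' j..r' j}" for j
    using img[of "j + N"] by (simp add: l'_def r'_def)
  have nd': "l' j < r' j" for j using nd[of "j + N"] by (simp add: l'_def r'_def N_def)
  have t1: "\<forall>n. 0 \<le> l' n \<and> l' n \<le> r' n \<and> r' n \<le> 1 \<and> {l' n..r' n} \<noteq> {0..1}"
  proof
    fix n
    have "{l' n..r' n} \<noteq> {0..1}" using proper2[of "n + N"] by (simp add: l'_def r'_def N_def)
    then show "0 \<le> l' n \<and> l' n \<le> r' n \<and> r' n \<le> 1 \<and> {l' n..r' n} \<noteq> {0..1}"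
      using bnd[of "n + N"] by (simp add: l'_def r'_def)
  qed
  have t2: "\<forall>n. f ` {l' (Suc n)..r' (Suc n)} = {l' n..r' n}" using img' by blast
  have t3: "\<exists>m. \<forall>n\<ge>m. l' n < r' n" using nd' by blast
  have tight: "tight f l' r'" unfolding tight_def using t1 t2 t3 by blast
  define NN where "NN = {j. 1 \<le> j \<and> j + N \<in> ?Bad}"
  have infNN: "infinite NN"
    unfolding infinite_nat_iff_unbounded_le
  proof
    fix k
    obtain n where n: "k + N + 1 \<le> n" "n \<in> ?Bad"
      using inf unfolding infinite_nat_iff_unbounded_le by blast
    show "\<exists>j\<ge>k. j \<in> NN"
      by (rule exI[of _ "n - N"]) (use n in \<open>auto simp: NN_def\<close>)
  qed
  define Q where "Q j ab \<longleftrightarrow> 0 \<le> fst ab \<and> fst ab < snd ab \<and> snd ab \<le> 1 \<and>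
      {fst ab..snd ab} \<inter> {l' j..r' j} \<subseteq> {l' j, r' j} \<and> f ` {fst ab..snd ab} = f ` {l' j..r' j}" for j ab
  have ex: "\<exists>ab. Q j ab" if j: "j \<in> NN" for j
  proof -
    have j1: "1 \<le> j" "j + N \<in> ?Bad" using j by (auto simp: NN_def)
    then obtain y0 y1 where y: "0 \<le> y0" "y0 \<le> y1" "y1 \<le> 1"
      "{y0..y1} \<inter> {l' j..r' j} \<subseteq> {l' j, r' j}" "{0..1} \<subseteq> f ` {y0..y1}"
      unfolding l'_def r'_def by blast
    have jj: "j = Suc (j - 1)" using j1 by simp
    have tgt: "f ` {l' j..r' j} = {l' (j - 1)..r' (j - 1)}"
      using img'[of "j - 1"] jj by simp
    have "{l' (j - 1)..r' (j - 1)} \<subseteq> {0..1}" using bnd[of "j - 1 + N"] by (auto simp: l'_def r'_def)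
    then have sub: "{l' (j - 1)..r' (j - 1)} \<subseteq> f ` {y0..y1}" using y(5) by blast
    have ct: "continuous_on {y0..y1} f" by (rule continuous_on_subset[OF cont]) (use y in auto)
    obtain a b where ab: "y0 \<le> a" "a < b" "b \<le> y1" "f ` {a..b} = {l' (j - 1)..r' (j - 1)}"
      using exact_sub[OF ct y(2) nd' sub] by blast
    have "{a..b} \<inter> {l' j..r' j} \<subseteq> {y0..y1} \<inter> {l' j..r' j}" using ab(1,3) by auto
    then have "{a..b} \<inter> {l' j..r' j} \<subseteq> {l' j, r' j}" using y(4) by (rule subset_trans)
    then have "Q j (a, b)" using ab y tgt unfolding Q_def by auto
    then show ?thesis by blast
  qed
  then have "\<forall>j\<in>NN. \<exists>ab. Q j ab" by blast
  then obtain g where g: "\<And>j. j \<in> NN \<Longrightarrow> Q j (g j)" using bchoice[of NN Q] by blast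
  have g': "\<forall>n\<in>NN. 0 \<le> fst (g n) \<and> fst (g n) < snd (g n) \<and> snd (g n) \<le> 1 \<and>
        {fst (g n)..snd (g n)} \<inter> {l' n..r' n} \<subseteq> {l' n, r' n} \<and>
        f ` {fst (g n)..snd (g n)} = f ` {l' n..r' n}"
    using g unfolding Q_def by blast
  have "\<exists>N :: nat set. \<exists>a b :: nat \<Rightarrow> real. infinite N \<and>
        (\<forall>n\<in>N. 0 \<le> a n \<and> a n < b n \<and> b n \<le> 1 \<and>
           {a n..b n} \<inter> {l' n..r' n} \<subseteq> {l' n, r' n} \<and>
           f ` {a n..b n} = f ` {l' n..r' n})"
  proof (rule exI[of _ NN], rule exI[of _ "\<lambda>n. fst (g n)"], rule exI[of _ "\<lambda>n. snd (g n)"])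
    show "infinite NN \<and> (\<forall>n\<in>NN. 0 \<le> fst (g n) \<and> fst (g n) < snd (g n) \<and> snd (g n) \<le> 1 \<and>
        {fst (g n)..snd (g n)} \<inter> {l' n..r' n} \<subseteq> {l' n, r' n} \<and>
        f ` {fst (g n)..snd (g n)} = f ` {l' n..r' n})"
      using infNN g' by (intro conjI)
  qed
  then have "splitting_seq f l' r'" unfolding splitting_seq_def using tight by blast
  then have "admits_splitting f" unfolding admits_splitting_def by blast
  then show False using nosplit by simp
qed

lemma horseshoe:
  fixes f :: "real \<Rightarrow> real"
  assumes cont: "continuous_on {0..1} f"
    and a: "a1 < a2" "0 \<le> a1" "a2 \<le> 1" and b: "b1 < b2" "0 \<le> b1" "b2 \<le> 1"
    and disj: "{b1..b2} \<inter> {a1..a2} \<subseteq> {a1, a2}"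
    and covA: "{a1..a2} \<subseteq> f ` {a1..a2}" and covB: "{a1..a2} \<subseteq> f ` {b1..b2}"
  shows "admits_splitting f"
proof -
  define P where "P p q \<longleftrightarrow> a1 \<le> fst q \<and> fst q < snd q \<and> snd q \<le> a2 \<and> f ` {fst q..snd q} = {fst p..snd p}"
    for p q :: "real \<times> real"
  define T where "T = rec_nat (a1, a2) (\<lambda>n p. SOME q. P p q)"
  have T0: "T 0 = (a1, a2)" by (simp add: T_def)
  have TS: "T (Suc n) = (SOME q. P (T n) q)" for n by (simp add: T_def)
  have ctA: "continuous_on {a1..a2} f" by (rule continuous_on_subset[OF cont]) (use a in auto)
  have ctB: "continuous_on {b1..b2} f" by (rule continuous_on_subset[OF cont]) (use b in auto)
  have inv: "a1 \<le> fst (T n) \<and> fst (T n) < snd (T n) \<and> snd (T n) \<le> a2 \<and>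
      f ` {fst (T (Suc n))..snd (T (Suc n))} = {fst (T n)..snd (T n)} \<and>
      a1 \<le> fst (T (Suc n)) \<and> fst (T (Suc n)) < snd (T (Suc n)) \<and> snd (T (Suc n)) \<le> a2" for n
  proof (induction n)
    case 0
    have "{a1..a2} \<subseteq> f ` {a1..a2}" by (rule covA)
    then obtain x y where "a1 \<le> x" "x < y" "y \<le> a2" "f ` {x..y} = {a1..a2}"
      using exact_sub[OF ctA less_imp_le[OF a(1)] a(1)] by blast
    then have "P (T 0) (x, y)" unfolding P_def T0 by simp
    then have "P (T 0) (T (Suc 0))" unfolding TS by (rule someI)
    then show ?case unfolding P_def T0 using a by simp
  next
    case (Suc n)
    have h: "a1 \<le> fst (T (Suc n))" "fst (T (Suc n)) < snd (T (Suc n))" "snd (T (Suc n)) \<le> a2"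
      using Suc.IH by auto
    have "{fst (T (Suc n))..snd (T (Suc n))} \<subseteq> {a1..a2}" using h by auto
    then have "{fst (T (Suc n))..snd (T (Suc n))} \<subseteq> f ` {a1..a2}" using covA by (rule subset_trans)
    then obtain x y where "a1 \<le> x" "x < y" "y \<le> a2" "f ` {x..y} = {fst (T (Suc n))..snd (T (Suc n))}"
      using exact_sub[OF ctA less_imp_le[OF a(1)] h(2)] by blast
    then have "P (T (Suc n)) (x, y)" unfolding P_def by simp
    then have "P (T (Suc n)) (T (Suc (Suc n)))" unfolding TS[of "Suc n"] by (rule someI)
    then show ?case unfolding P_def using h by simp
  qed
  define l where "l n = fst (T n)" for n
  define r where "r n = snd (T n)" for n
  have lr: "a1 \<le> l n" "l n < r n" "r n \<le> a2" for n using inv[of n] by (auto simp: l_def r_def)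
  have img: "f ` {l (Suc n)..r (Suc n)} = {l n..r n}" for n using inv[of n] by (simp add: l_def r_def)
  have proper: "{l n..r n} \<noteq> {0..1}" for n
  proof
    assume eq: "{l n..r n} = {0..1}"
    have "0 \<in> {l n..r n}" "1 \<in> {l n..r n}" using eq by auto
    then have "a1 \<le> 0" "1 \<le> a2" using lr[of n] by auto
    then have a01: "a1 = 0" "a2 = 1" using a by auto
    have m: "(b1 + b2) / 2 \<in> {b1..b2} \<inter> {a1..a2}" "b1 \<in> {b1..b2} \<inter> {a1..a2}" "b2 \<in> {b1..b2} \<inter> {a1..a2}"
      using a01 b by auto
    have "(b1 + b2) / 2 \<in> {a1, a2}" "b1 \<in> {a1, a2}" "b2 \<in> {a1, a2}"
      using m disj by (meson subsetD)+
    then show False using b by auto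
  qed
  have t1: "\<forall>n. 0 \<le> l n \<and> l n \<le> r n \<and> r n \<le> 1 \<and> {l n..r n} \<noteq> {0..1}"
  proof
    fix n
    show "0 \<le> l n \<and> l n \<le> r n \<and> r n \<le> 1 \<and> {l n..r n} \<noteq> {0..1}"
      using lr[of n] proper[of n] a by simp
  qed
  have t2: "\<forall>n. f ` {l (Suc n)..r (Suc n)} = {l n..r n}" using img by blast
  have t3: "\<exists>m. \<forall>n\<ge>m. l n < r n" using lr by blast
  have tight: "tight f l r" unfolding tight_def using t1 t2 t3 by blast
  define NN where "NN = {n::nat. 1 \<le> n}"
  have infNN: "infinite NN"
    unfolding infinite_nat_iff_unbounded_le NN_def
  proof
    fix m :: nat show "\<exists>n\<ge>m. n \<in> {n. 1 \<le> n}" by (rule exI[of _ "Suc m"]) simp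
  qed
  define Q where "Q j ab \<longleftrightarrow> 0 \<le> fst ab \<and> fst ab < snd ab \<and> snd ab \<le> 1 \<and>
      {fst ab..snd ab} \<inter> {l j..r j} \<subseteq> {l j, r j} \<and> f ` {fst ab..snd ab} = f ` {l j..r j}" for j ab
  have ex: "\<exists>ab. Q j ab" if j: "j \<in> NN" for j
  proof -
    have jj: "j = Suc (j - 1)" using j by (simp add: NN_def)
    have tgt: "f ` {l j..r j} = {l (j - 1)..r (j - 1)}" using img[of "j - 1"] jj by simp
    have "{l (j - 1)..r (j - 1)} \<subseteq> {a1..a2}" using lr[of "j - 1"] by auto
    then have sub: "{l (j - 1)..r (j - 1)} \<subseteq> f ` {b1..b2}" using covB by (rule subset_trans)
    obtain x y where xy: "b1 \<le> x" "x < y" "y \<le> b2" "f ` {x..y} = {l (j - 1)..r (j - 1)}"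
      using exact_sub[OF ctB less_imp_le[OF b(1)] lr(2)[of "j - 1"] sub] by blast
    have "{x..y} \<inter> {l j..r j} \<subseteq> {b1..b2} \<inter> {a1..a2}" using xy lr[of j] by auto
    then have s1: "{x..y} \<inter> {l j..r j} \<subseteq> {a1, a2}" using disj by (rule subset_trans)
    have "{x..y} \<inter> {l j..r j} \<subseteq> {l j, r j}"
    proof
      fix v assume v: "v \<in> {x..y} \<inter> {l j..r j}"
      then have "v = a1 \<or> v = a2" using s1 by auto
      then show "v \<in> {l j, r j}" using v lr[of j] by auto
    qed
    then have "Q j (x, y)" using xy b tgt unfolding Q_def by auto
    then show ?thesis by blast
  qed
  then have "\<forall>j\<in>NN. \<exists>ab. Q j ab" by blast
  then obtain g where g: "\<And>j. j \<in> NN \<Longrightarrow> Q j (g j)" using bchoice[of NN Q] by blast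
  have g': "\<forall>n\<in>NN. 0 \<le> fst (g n) \<and> fst (g n) < snd (g n) \<and> snd (g n) \<le> 1 \<and>
        {fst (g n)..snd (g n)} \<inter> {l n..r n} \<subseteq> {l n, r n} \<and>
        f ` {fst (g n)..snd (g n)} = f ` {l n..r n}"
    using g unfolding Q_def by blast
  have "\<exists>N :: nat set. \<exists>a b :: nat \<Rightarrow> real. infinite N \<and>
        (\<forall>n\<in>N. 0 \<le> a n \<and> a n < b n \<and> b n \<le> 1 \<and>
           {a n..b n} \<inter> {l n..r n} \<subseteq> {l n, r n} \<and>
           f ` {a n..b n} = f ` {l n..r n})"
  proof (rule exI[of _ NN], rule exI[of _ "\<lambda>n. fst (g n)"], rule exI[of _ "\<lambda>n. snd (g n)"])
    show "infinite NN \<and> (\<forall>n\<in>NN. 0 \<le> fst (g n) \<and> fst (g n) < snd (g n) \<and> snd (g n) \<le> 1 \<and>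
        {fst (g n)..snd (g n)} \<inter> {l n..r n} \<subseteq> {l n, r n} \<and>
        f ` {fst (g n)..snd (g n)} = f ` {l n..r n})"
      using infNN g' by (intro conjI)
  qed
  then have "splitting_seq f l r" unfolding splitting_seq_def using tight by blast
  then show ?thesis unfolding admits_splitting_def by blast
qed

lemma interval_comp:
  fixes c :: real
  assumes c: "c = 0 \<or> c = 1" and i1: "c \<in> {a1..b1}" "0 \<le> a1" "b1 \<le> 1"
    and i2: "c \<in> {a2..b2}" "0 \<le> a2" "b2 \<le> 1"
  shows "{a1..b1} \<subseteq> {a2..b2} \<or> {a2..b2} \<subseteq> {a1..b1}"
  using c
proof
  assume "c = 0"
  then have "a1 = 0" "a2 = 0" using i1 i2 by auto
  then show ?thesis by (cases "b1 \<le> b2") auto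
next
  assume "c = 1"
  then have "b1 = 1" "b2 = 1" using i1 i2 by auto
  then show ?thesis by (cases "a1 \<le> a2") auto
qed

lemma all_from_inf:
  assumes "A \<subseteq> inv_lim f" "B \<subseteq> inv_lim f" "infinite {n. proj A n \<subseteq> proj B n}"
  shows "proj A k \<subseteq> proj B k"
proof -
  obtain n where n: "k \<le> n" "proj A n \<subseteq> proj B n"
    using assms(3) unfolding infinite_nat_iff_unbounded_le by blast
  then have "proj A (k + (n - k)) \<subseteq> proj B (k + (n - k))" by simp
  then show ?thesis by (rule proj_down[OF assms(1,2)])
qed

lemma sub_from_all:
  assumes "subcontinuum A (inv_lim f)" "subcontinuum B (inv_lim f)" "\<And>k. proj A k \<subseteq> proj B k"
  shows "A \<subseteq> B"
proof
  fix x assume x: "x \<in> A"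
  have B: "B \<subseteq> inv_lim f" "compact B" using assms(2) unfolding subcontinuum_def by auto
  have xX: "x \<in> inv_lim f" using assms(1) x unfolding subcontinuum_def by auto
  have "x n \<in> proj B n" for n
  proof -
    have "x n \<in> proj A n" using x unfolding proj_def by simp
    then show ?thesis using assms(3) by blast
  qed
  then show "x \<in> B" by (rule subset_from_proj[OF B xX])
qed

lemma endpoint_crit:
  fixes f :: "real \<Rightarrow> real"
  assumes q: "q \<in> inv_lim f" and c: "c = 0 \<or> c = 1" and M: "infinite M"
    and good: "\<And>A. subcontinuum A (inv_lim f) \<Longrightarrow> q \<in> A \<Longrightarrow>
      (\<forall>n. proj A n \<subseteq> {q n}) \<or> (\<exists>N. \<forall>n\<ge>N. n \<in> M \<longrightarrow> c \<in> proj A n)"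
  shows "endpoint (inv_lim f) q"
  unfolding endpoint_def
proof (intro conjI q allI impI)
  fix A B
  assume A: "subcontinuum A (inv_lim f)" and B: "subcontinuum B (inv_lim f)"
    and qA: "q \<in> A" and qB: "q \<in> B"
  have AX: "A \<subseteq> inv_lim f" using A unfolding subcontinuum_def by simp
  have BX: "B \<subseteq> inv_lim f" using B unfolding subcontinuum_def by simp
  have sing: "A' \<subseteq> B'" if "\<forall>n. proj A' n \<subseteq> {q n}" "q \<in> B'" for A' B'
  proof
    fix x assume x: "x \<in> A'"
    have "x n = q n" for n
    proof -
      have "x n \<in> proj A' n" using x unfolding proj_def by simp
      then show ?thesis using that(1) by blast
    qed
    then have "x = q" by (rule ext)
    then show "x \<in> B'" using that(2) by simp
  qed
  show "A \<subseteq> B \<or> B \<subseteq> A"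
  proof (cases "\<forall>n. proj A n \<subseteq> {q n}")
    case True
    then show ?thesis using sing qB by blast
  next
    case nA: False
    show ?thesis
    proof (cases "\<forall>n. proj B n \<subseteq> {q n}")
      case True
      then show ?thesis using sing qA by blast
    next
      case nB: False
      obtain NA where NA: "\<And>n. NA \<le> n \<Longrightarrow> n \<in> M \<Longrightarrow> c \<in> proj A n" using good[OF A qA] nA by blast
      obtain NB where NB: "\<And>n. NB \<le> n \<Longrightarrow> n \<in> M \<Longrightarrow> c \<in> proj B n" using good[OF B qB] nB by blast
      define C where "C = {n \<in> M. max NA NB \<le> n}"
      have infC: "infinite C"
      proof -
        have "M \<subseteq> C \<union> {..<max NA NB}" unfolding C_def by auto
        then show ?thesis using M finite_subset by blast
      qed
      have comp: "proj A n \<subseteq> proj B n \<or> proj B n \<subseteq> proj A n" if n: "n \<in> C" for n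
      proof -
        obtain a1 b1 where ab1: "proj A n = {a1..b1}" "0 \<le> a1" "a1 \<le> b1" "b1 \<le> 1"
          using proj_interval[OF A] by blast
        obtain a2 b2 where ab2: "proj B n = {a2..b2}" "0 \<le> a2" "a2 \<le> b2" "b2 \<le> 1"
          using proj_interval[OF B] by blast
        have "c \<in> proj A n" "c \<in> proj B n" using NA NB n unfolding C_def by auto
        then show ?thesis using interval_comp[OF c, of a1 b1 a2 b2] ab1 ab2 by simp
      qed
      have "C \<subseteq> {n. proj A n \<subseteq> proj B n} \<union> {n. proj B n \<subseteq> proj A n}" using comp by blast
      then have "infinite ({n. proj A n \<subseteq> proj B n} \<union> {n. proj B n \<subseteq> proj A n})"
        using infC finite_subset by blast
      then have "infinite {n. proj A n \<subseteq> proj B n} \<or> infinite {n. proj B n \<subseteq> proj A n}"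
        by simp
      then show ?thesis
      proof
        assume "infinite {n. proj A n \<subseteq> proj B n}"
        then have "\<And>k. proj A k \<subseteq> proj B k" by (rule all_from_inf[OF AX BX])
        then show ?thesis using sub_from_all[OF A B] by blast
      next
        assume "infinite {n. proj B n \<subseteq> proj A n}"
        then have "\<And>k. proj B k \<subseteq> proj A k" by (rule all_from_inf[OF BX AX])
        then show ?thesis using sub_from_all[OF B A] by blast
      qed
    qed
  qed
qed

lemma good_common:
  fixes f :: "real \<Rightarrow> real"
  assumes cont: "continuous_on {0..1} f" and onto: "f ` {0..1} = {0..1}"
    and nosplit: "\<not> admits_splitting f"
    and A: "subcontinuum A (inv_lim f)" and qA: "q \<in> A"
  shows "(\<forall>n. proj A n \<subseteq> {q n}) \<or>
    (\<exists>l r N. (\<forall>n. proj A n = {l n..r n}) \<and> (\<forall>n. 0 \<le> l n \<and> l n \<le> r n \<and> r n \<le> 1) \<and>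
      (\<forall>n\<ge>N. \<not> (\<exists>y0 y1. 0 \<le> y0 \<and> y0 \<le> y1 \<and> y1 \<le> 1 \<and>
            {y0..y1} \<inter> {l n..r n} \<subseteq> {l n, r n} \<and> {0..1} \<subseteq> f ` {y0..y1})))"
proof -
  have AX: "A \<subseteq> inv_lim f" using A unfolding subcontinuum_def by simp
  have "\<forall>n. \<exists>ab. proj A n = {fst ab..snd ab} \<and> 0 \<le> fst ab \<and> fst ab \<le> snd ab \<and> snd ab \<le> 1"
  proof
    fix n
    obtain a b where "proj A n = {a..b} \<and> 0 \<le> a \<and> a \<le> b \<and> b \<le> 1"
      using proj_interval[OF A] by blast
    then show "\<exists>ab. proj A n = {fst ab..snd ab} \<and> 0 \<le> fst ab \<and> fst ab \<le> snd ab \<and> snd ab \<le> 1"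
      by (intro exI[of _ "(a, b)"]) simp
  qed
  then obtain h where h: "\<And>n. proj A n = {fst (h n)..snd (h n)} \<and> 0 \<le> fst (h n) \<and> fst (h n) \<le> snd (h n) \<and> snd (h n) \<le> 1"
    by (rule choice[THEN exE]) blast
  define l where "l n = fst (h n)" for n
  define r where "r n = snd (h n)" for n
  have P: "proj A n = {l n..r n}" for n using h[of n] by (simp add: l_def r_def)
  have bnd: "0 \<le> l n \<and> l n \<le> r n \<and> r n \<le> 1" for n using h[of n] by (simp add: l_def r_def)
  have img: "f ` {l (Suc n)..r (Suc n)} = {l n..r n}" for n
    using proj_step[OF AX, of n] P by simp
  show ?thesis
  proof (cases "\<forall>n. l n = r n")
    case True
    have "proj A n \<subseteq> {q n}" for n
    proof -
      have "q n \<in> proj A n" using qA unfolding proj_def by simp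
      then show ?thesis using P[of n] True by auto
    qed
    then show ?thesis by blast
  next
    case False
    then obtain m where "l m \<noteq> r m" by blast
    then have lm: "l m < r m" using bnd[of m] by simp
    have nd: "l n < r n" if "m \<le> n" for n
      using that
    proof (induction n rule: dec_induct)
      case base then show ?case by (rule lm)
    next
      case (step n)
      show ?case
      proof (rule ccontr)
        assume "\<not> l (Suc n) < r (Suc n)"
        then have "l (Suc n) = r (Suc n)" using bnd[of "Suc n"] by simp
        then have "{l n..r n} = {f (l (Suc n))}" using img[of n] by simp
        then have "l n \<in> {f (l (Suc n))}" "r n \<in> {f (l (Suc n))}" using bnd[of n]
          by (metis atLeastAtMost_iff order_refl)+
        then have "l n = r n" by simp
        then show False using step.IH by simp
      qed
    qed
    have "finite {n. \<exists>y0 y1. 0 \<le> y0 \<and> y0 \<le> y1 \<and> y1 \<le> 1 \<and>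
            {y0..y1} \<inter> {l n..r n} \<subseteq> {l n, r n} \<and> {0..1} \<subseteq> f ` {y0..y1}}"
      by (rule core[of f l r m, OF cont onto nosplit bnd img nd])
    then obtain N where N: "\<And>n. n \<in> {n. \<exists>y0 y1. 0 \<le> y0 \<and> y0 \<le> y1 \<and> y1 \<le> 1 \<and>
            {y0..y1} \<inter> {l n..r n} \<subseteq> {l n, r n} \<and> {0..1} \<subseteq> f ` {y0..y1}} \<Longrightarrow> n \<le> N"
      unfolding finite_nat_set_iff_bounded_le by blast
    have "\<forall>n\<ge>Suc N. \<not> (\<exists>y0 y1. 0 \<le> y0 \<and> y0 \<le> y1 \<and> y1 \<le> 1 \<and>
            {y0..y1} \<inter> {l n..r n} \<subseteq> {l n, r n} \<and> {0..1} \<subseteq> f ` {y0..y1})"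
    proof (intro allI impI)
      fix n assume "Suc N \<le> n"
      then show "\<not> (\<exists>y0 y1. 0 \<le> y0 \<and> y0 \<le> y1 \<and> y1 \<le> 1 \<and>
            {y0..y1} \<inter> {l n..r n} \<subseteq> {l n, r n} \<and> {0..1} \<subseteq> f ` {y0..y1})"
        using N[of n] by auto
    qed
    then show ?thesis using P bnd by blast
  qed
qed

lemma good_left:
  fixes f :: "real \<Rightarrow> real"
  assumes cont: "continuous_on {0..1} f" and onto: "f ` {0..1} = {0..1}"
    and nosplit: "\<not> admits_splitting f"
    and A: "subcontinuum A (inv_lim f)" and qA: "q \<in> A"
    and w: "w \<le> 1" and W: "\<And>y. w \<le> y \<Longrightarrow> y \<le> 1 \<Longrightarrow> {0..1} \<subseteq> f ` {0..y}"
  shows "(\<forall>n. proj A n \<subseteq> {q n}) \<or> (\<exists>N. \<forall>n\<ge>N. w \<le> q (Suc n) \<longrightarrow> f w \<in> proj A n)"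
proof -
  have AX: "A \<subseteq> inv_lim f" using A unfolding subcontinuum_def by simp
  from good_common[OF cont onto nosplit A qA]
  show ?thesis
  proof
    assume "\<exists>l r N. (\<forall>n. proj A n = {l n..r n}) \<and> (\<forall>n. 0 \<le> l n \<and> l n \<le> r n \<and> r n \<le> 1) \<and>
      (\<forall>n\<ge>N. \<not> (\<exists>y0 y1. 0 \<le> y0 \<and> y0 \<le> y1 \<and> y1 \<le> 1 \<and>
            {y0..y1} \<inter> {l n..r n} \<subseteq> {l n, r n} \<and> {0..1} \<subseteq> f ` {y0..y1}))"
    then obtain l r N where P: "\<And>n. proj A n = {l n..r n}"
      and bnd: "\<And>n. 0 \<le> l n \<and> l n \<le> r n \<and> r n \<le> 1"
      and nb: "\<And>n y0 y1. N \<le> n \<Longrightarrow> 0 \<le> y0 \<Longrightarrow> y0 \<le> y1 \<Longrightarrow> y1 \<le> 1 \<Longrightarrow>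
            {y0..y1} \<inter> {l n..r n} \<subseteq> {l n, r n} \<Longrightarrow> {0..1} \<subseteq> f ` {y0..y1} \<Longrightarrow> False"
      by blast
    have "f w \<in> proj A n" if n: "N \<le> n" "w \<le> q (Suc n)" for n
    proof -
      have qS: "q (Suc n) \<in> {l (Suc n)..r (Suc n)}"
        using qA P[of "Suc n"] unfolding proj_def by auto
      have "l (Suc n) < w"
      proof (rule ccontr)
        assume "\<not> l (Suc n) < w"
        then have wl: "w \<le> l (Suc n)" by simp
        have "{0..l (Suc n)} \<inter> {l (Suc n)..r (Suc n)} \<subseteq> {l (Suc n), r (Suc n)}" by auto
        moreover have "{0..1} \<subseteq> f ` {0..l (Suc n)}" using W[OF wl] bnd[of "Suc n"] by simp
        ultimately show False
          using nb[of "Suc n" 0 "l (Suc n)"] n bnd[of "Suc n"] by simp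
      qed
      then have "w \<in> proj A (Suc n)" using P[of "Suc n"] qS n(2) by simp
      then have "f w \<in> f ` proj A (Suc n)" by simp
      then show ?thesis using proj_step[OF AX, of n] by simp
    qed
    then show ?thesis by blast
  qed simp
qed

lemma good_right:
  fixes f :: "real \<Rightarrow> real"
  assumes cont: "continuous_on {0..1} f" and onto: "f ` {0..1} = {0..1}"
    and nosplit: "\<not> admits_splitting f"
    and A: "subcontinuum A (inv_lim f)" and qA: "q \<in> A"
    and w: "0 \<le> w" and W: "\<And>y. 0 \<le> y \<Longrightarrow> y \<le> w \<Longrightarrow> {0..1} \<subseteq> f ` {y..1}"
  shows "(\<forall>n. proj A n \<subseteq> {q n}) \<or> (\<exists>N. \<forall>n\<ge>N. q (Suc n) \<le> w \<longrightarrow> f w \<in> proj A n)"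
proof -
  have AX: "A \<subseteq> inv_lim f" using A unfolding subcontinuum_def by simp
  from good_common[OF cont onto nosplit A qA]
  show ?thesis
  proof
    assume "\<exists>l r N. (\<forall>n. proj A n = {l n..r n}) \<and> (\<forall>n. 0 \<le> l n \<and> l n \<le> r n \<and> r n \<le> 1) \<and>
      (\<forall>n\<ge>N. \<not> (\<exists>y0 y1. 0 \<le> y0 \<and> y0 \<le> y1 \<and> y1 \<le> 1 \<and>
            {y0..y1} \<inter> {l n..r n} \<subseteq> {l n, r n} \<and> {0..1} \<subseteq> f ` {y0..y1}))"
    then obtain l r N where P: "\<And>n. proj A n = {l n..r n}"
      and bnd: "\<And>n. 0 \<le> l n \<and> l n \<le> r n \<and> r n \<le> 1"
      and nb: "\<And>n y0 y1. N \<le> n \<Longrightarrow> 0 \<le> y0 \<Longrightarrow> y0 \<le> y1 \<Longrightarrow> y1 \<le> 1 \<Longrightarrow>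
            {y0..y1} \<inter> {l n..r n} \<subseteq> {l n, r n} \<Longrightarrow> {0..1} \<subseteq> f ` {y0..y1} \<Longrightarrow> False"
      by blast
    have "f w \<in> proj A n" if n: "N \<le> n" "q (Suc n) \<le> w" for n
    proof -
      have qS: "q (Suc n) \<in> {l (Suc n)..r (Suc n)}"
        using qA P[of "Suc n"] unfolding proj_def by auto
      have "w < r (Suc n)"
      proof (rule ccontr)
        assume "\<not> w < r (Suc n)"
        then have wl: "r (Suc n) \<le> w" by simp
        have "{r (Suc n)..1} \<inter> {l (Suc n)..r (Suc n)} \<subseteq> {l (Suc n), r (Suc n)}" by auto
        moreover have "{0..1} \<subseteq> f ` {r (Suc n)..1}" using W[OF _ wl] bnd[of "Suc n"] by simp
        ultimately show False
          using nb[of "Suc n" "r (Suc n)" 1] n bnd[of "Suc n"] by simp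
      qed
      then have "w \<in> proj A (Suc n)" using P[of "Suc n"] qS n(2) by simp
      then have "f w \<in> f ` proj A (Suc n)" by simp
      then show ?thesis using proj_step[OF AX, of n] by simp
    qed
    then show ?thesis by blast
  qed simp
qed

lemma cover_pts:
  fixes f :: "real \<Rightarrow> real"
  assumes ct: "continuous_on {a..b} f" and x: "x \<in> {a..b}" and y: "y \<in> {a..b}"
  shows "{f x..f y} \<subseteq> f ` {a..b}"
proof
  fix v assume v: "v \<in> {f x..f y}"
  have "connected (f ` {a..b})" by (rule connected_continuous_image[OF ct connected_Icc])
  then have "is_interval (f ` {a..b})" by (simp add: is_interval_connected_1)
  moreover have "f x \<in> f ` {a..b}" "f y \<in> f ` {a..b}" using x y by auto
  ultimately show "v \<in> f ` {a..b}" using v unfolding is_interval_1 by auto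
qed

lemma right_of_fix:
  fixes f :: "real \<Rightarrow> real"
  assumes cont: "continuous_on {0..1} f" and onto: "f ` {0..1} = {0..1}"
    and d: "d \<in> {0..1}" "f d = d" and dmax: "\<forall>x\<in>{0..1}. f x = x \<longrightarrow> x \<le> d"
    and t: "d < t" "t \<le> 1"
  shows "f t < t"
proof (rule ccontr)
  assume "\<not> f t < t"
  then have ft: "t \<le> f t" by simp
  have "f t \<noteq> t" using dmax t d by auto
  then have ft2: "t < f t" using ft by simp
  have "f 1 \<in> {0..1}" using onto by auto
  then have "f 1 \<le> 1" by simp
  have "(\<lambda>x. f x - x) 1 \<le> 0" "0 \<le> (\<lambda>x. f x - x) t" using \<open>f 1 \<le> 1\<close> ft by auto
  moreover have "continuous_on {t..1} (\<lambda>x. f x - x)"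
    by (intro continuous_intros continuous_on_subset[OF cont]) (use t d in auto)
  ultimately obtain x where x: "t \<le> x" "x \<le> 1" "f x - x = 0"
    using IVT2'[of "\<lambda>x. f x - x" 1 0 t] t by auto
  then have "x \<le> d" using dmax t d by auto
  then show False using x t by simp
qed

lemma left_of_fix:
  fixes f :: "real \<Rightarrow> real"
  assumes cont: "continuous_on {0..1} f" and onto: "f ` {0..1} = {0..1}"
    and e: "e \<in> {0..1}" "f e = e" and emin: "\<forall>x\<in>{0..1}. f x = x \<longrightarrow> e \<le> x"
    and t: "0 \<le> t" "t < e"
  shows "t < f t"
proof (rule ccontr)
  assume "\<not> t < f t"
  then have ft: "f t \<le> t" by simp
  have "f t \<noteq> t" using emin t e by auto
  then have ft2: "f t < t" using ft by simp
  have "f 0 \<in> {0..1}" using onto by auto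
  then have "0 \<le> f 0" by simp
  have "(\<lambda>x. f x - x) t \<le> 0" "0 \<le> (\<lambda>x. f x - x) 0" using \<open>0 \<le> f 0\<close> ft by auto
  moreover have "continuous_on {0..t} (\<lambda>x. f x - x)"
    by (intro continuous_intros continuous_on_subset[OF cont]) (use t e in auto)
  ultimately obtain x where x: "0 \<le> x" "x \<le> t" "f x - x = 0"
    using IVT2'[of "\<lambda>x. f x - x" t 0 0] t by auto
  then have "e \<le> x" using emin t e by auto
  then show False using x t by simp
qed

lemma const_in_inv_lim:
  assumes "d \<in> {0..1}" "f d = d"
  shows "(\<lambda>n. d) \<in> inv_lim f"
  using assms unfolding inv_lim_def by auto

lemma endpoint_max:
  fixes f :: "real \<Rightarrow> real"
  assumes cont: "continuous_on {0..1} f" and onto: "f ` {0..1} = {0..1}"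
    and nosplit: "\<not> admits_splitting f"
    and d: "d \<in> {0..1}" "f d = d" and dmax: "\<forall>x\<in>{0..1}. f x = x \<longrightarrow> x \<le> d"
    and e0: "e0 \<in> {0..1}" "f e0 = e0" "e0 \<noteq> d"
  shows "endpoint (inv_lim f) (\<lambda>n. d)"
proof -
  have qX: "(\<lambda>n. d) \<in> inv_lim f" by (rule const_in_inv_lim[of d f, OF d])
  show ?thesis
  proof (cases "d = 1")
    case True
    show ?thesis
    proof (rule endpoint_crit[OF qX, of 1 UNIV])
      fix A assume A: "subcontinuum A (inv_lim f)" "(\<lambda>n. d) \<in> A"
      have "1 \<in> proj A n" for n using A(2) True unfolding proj_def by force
      then show "(\<forall>n. proj A n \<subseteq> {d}) \<or> (\<exists>N. \<forall>n\<ge>N. n \<in> UNIV \<longrightarrow> 1 \<in> proj A n)" by blast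
    qed simp_all
  next
    case False
    then have d1: "d < 1" using d by simp
    have ed: "e0 < d" using dmax e0 by force
    obtain u where u: "u \<in> {0..1}" "f u = 1" using onto by (metis atLeastAtMost_iff image_iff order_refl zero_le_one)
    obtain z where z: "z \<in> {0..1}" "f z = 0" using onto by (metis atLeastAtMost_iff image_iff order_refl zero_le_one)
    have ud: "u < d"
    proof (rule ccontr)
      assume "\<not> u < d"
      moreover have "u \<noteq> d" using u d d1 by auto
      ultimately have du: "d < u" by simp
      have "f u < u" by (rule right_of_fix[OF cont onto d dmax du]) (use u in simp)
      then show False using u by simp
    qed
    have zd: "z < d"
    proof (rule ccontr)
      assume "\<not> z < d"
      moreover have "z \<noteq> d" using z d ed e0 by auto
      ultimately have dz: "d < z" by simp
      have ctA: "continuous_on {e0..d} f" by (rule continuous_on_subset[OF cont]) (use d e0 in auto)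
      have ctB: "continuous_on {d..z} f" by (rule continuous_on_subset[OF cont]) (use d z in auto)
      have covA: "{e0..d} \<subseteq> f ` {e0..d}" using cover_pts[OF ctA, of e0 d] ed e0 d by simp
      have "{f z..f d} \<subseteq> f ` {d..z}" using cover_pts[OF ctB, of z d] dz by simp
      then have covB: "{e0..d} \<subseteq> f ` {d..z}" using z d e0 by auto
      have disj: "{d..z} \<inter> {e0..d} \<subseteq> {e0, d}" by auto
      have "admits_splitting f"
        by (rule horseshoe[OF cont ed _ _ dz _ _ disj covA covB]) (use d e0 z in auto)
      then show False using nosplit by simp
    qed
    define w where "w = max u z"
    have wd: "w \<le> d" using ud zd by (simp add: w_def)
    have fw: "f w = 0 \<or> f w = 1" using u z by (auto simp: w_def max_def)
    have W: "{0..1} \<subseteq> f ` {0..y}" if y: "w \<le> y" "y \<le> 1" for y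
    proof -
      have ct: "continuous_on {0..y} f" by (rule continuous_on_subset[OF cont]) (use y in auto)
      have "{f z..f u} \<subseteq> f ` {0..y}" by (rule cover_pts[OF ct]) (use y u z in \<open>auto simp: w_def\<close>)
      then show ?thesis using u z by simp
    qed
    show ?thesis
    proof (rule endpoint_crit[OF qX fw, of UNIV])
      fix A assume A: "subcontinuum A (inv_lim f)" "(\<lambda>n. d) \<in> A"
      have "w \<le> 1" using wd d by simp
      from good_left[of f A "\<lambda>n. d" w, OF cont onto nosplit A(1) A(2) this W] wd d
      show "(\<forall>n. proj A n \<subseteq> {d}) \<or> (\<exists>N. \<forall>n\<ge>N. n \<in> UNIV \<longrightarrow> f w \<in> proj A n)" by auto
    qed simp
  qed
qed

lemma endpoint_min:
  fixes f :: "real \<Rightarrow> real"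
  assumes cont: "continuous_on {0..1} f" and onto: "f ` {0..1} = {0..1}"
    and nosplit: "\<not> admits_splitting f"
    and e: "e \<in> {0..1}" "f e = e" and emin: "\<forall>x\<in>{0..1}. f x = x \<longrightarrow> e \<le> x"
    and d0: "d0 \<in> {0..1}" "f d0 = d0" "d0 \<noteq> e"
  shows "endpoint (inv_lim f) (\<lambda>n. e)"
proof -
  have qX: "(\<lambda>n. e) \<in> inv_lim f" by (rule const_in_inv_lim[of e f, OF e])
  show ?thesis
  proof (cases "e = 0")
    case True
    show ?thesis
    proof (rule endpoint_crit[OF qX, of 0 UNIV])
      fix A assume A: "subcontinuum A (inv_lim f)" "(\<lambda>n. e) \<in> A"
      have "0 \<in> proj A n" for n using A(2) True unfolding proj_def by force
      then show "(\<forall>n. proj A n \<subseteq> {e}) \<or> (\<exists>N. \<forall>n\<ge>N. n \<in> UNIV \<longrightarrow> 0 \<in> proj A n)" by blast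
    qed simp_all
  next
    case False
    then have e0: "0 < e" using e by simp
    have ed: "e < d0" using emin d0 by force
    obtain u where u: "u \<in> {0..1}" "f u = 1" using onto by (metis atLeastAtMost_iff image_iff order_refl zero_le_one)
    obtain z where z: "z \<in> {0..1}" "f z = 0" using onto by (metis atLeastAtMost_iff image_iff order_refl zero_le_one)
    have ze: "e < z"
    proof (rule ccontr)
      assume "\<not> e < z"
      moreover have "z \<noteq> e" using z e e0 by auto
      ultimately have ze: "z < e" by simp
      have "z < f z" by (rule left_of_fix[OF cont onto e emin _ ze]) (use z in simp)
      then show False using z by simp
    qed
    have ue: "e < u"
    proof (rule ccontr)
      assume "\<not> e < u"
      moreover have "u \<noteq> e" using u e ed d0 by auto
      ultimately have ue: "u < e" by simp
      have ctA: "continuous_on {e..d0} f" by (rule continuous_on_subset[OF cont]) (use e d0 in auto)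
      have ctB: "continuous_on {u..e} f" by (rule continuous_on_subset[OF cont]) (use e u in auto)
      have covA: "{e..d0} \<subseteq> f ` {e..d0}" using cover_pts[OF ctA, of e d0] ed e d0 by simp
      have "{f e..f u} \<subseteq> f ` {u..e}" using cover_pts[OF ctB, of e u] ue by simp
      then have covB: "{e..d0} \<subseteq> f ` {u..e}" using u e d0 by auto
      have disj: "{u..e} \<inter> {e..d0} \<subseteq> {e, d0}" by auto
      have "admits_splitting f"
        by (rule horseshoe[OF cont ed _ _ ue _ _ disj covA covB]) (use d0 e u in auto)
      then show False using nosplit by simp
    qed
    define w where "w = min u z"
    have wd: "e \<le> w" using ue ze by (simp add: w_def)
    have fw: "f w = 0 \<or> f w = 1" using u z by (auto simp: w_def min_def)
    have W: "{0..1} \<subseteq> f ` {y..1}" if y: "0 \<le> y" "y \<le> w" for y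
    proof -
      have ct: "continuous_on {y..1} f" by (rule continuous_on_subset[OF cont]) (use y in auto)
      have "{f z..f u} \<subseteq> f ` {y..1}" by (rule cover_pts[OF ct]) (use y u z in \<open>auto simp: w_def\<close>)
      then show ?thesis using u z by simp
    qed
    show ?thesis
    proof (rule endpoint_crit[OF qX fw, of UNIV])
      fix A assume A: "subcontinuum A (inv_lim f)" "(\<lambda>n. e) \<in> A"
      have "0 \<le> w" using wd e by simp
      from good_right[of f A "\<lambda>n. e" w, OF cont onto nosplit A(1) A(2) this W] wd e
      show "(\<forall>n. proj A n \<subseteq> {e}) \<or> (\<exists>N. \<forall>n\<ge>N. n \<in> UNIV \<longrightarrow> f w \<in> proj A n)" by auto
    qed simp
  qed
qed

lemma ff_cont:
  fixes f :: "real \<Rightarrow> real"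
  assumes cont: "continuous_on {0..1} f" and onto: "f ` {0..1} = {0..1}"
  shows "continuous_on {0..1} (\<lambda>x. f (f x) - x)"
proof -
  have "continuous_on {0..1} (\<lambda>x. f (f x))"
    by (rule continuous_on_compose2[OF cont cont]) (use onto in simp)
  then show ?thesis by (intro continuous_intros)
qed

lemma ff_fix:
  fixes f :: "real \<Rightarrow> real"
  assumes cont: "continuous_on {0..1} f" and onto: "f ` {0..1} = {0..1}"
    and c: "0 \<le> c" "c \<le> 1" "f (f c) \<le> c"
  shows "\<exists>x. 0 \<le> x \<and> x \<le> c \<and> f (f x) = x"
proof -
  have "f 0 \<in> {0..1}" using onto by auto
  then have "f (f 0) \<in> {0..1}" using onto by auto
  then have h0: "0 \<le> (\<lambda>x. f (f x) - x) 0" by simp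
  have hc: "(\<lambda>x. f (f x) - x) c \<le> 0" using c by simp
  have ct: "continuous_on {0..c} (\<lambda>x. f (f x) - x)"
    by (rule continuous_on_subset[OF ff_cont[OF cont onto]]) (use c in auto)
  obtain x where "0 \<le> x" "x \<le> c" "f (f x) - x = 0"
    using IVT2'[of "\<lambda>x. f (f x) - x" c 0 0, OF hc h0 c(1) ct] by auto
  then show ?thesis by auto
qed

lemma endpoint_cycle:
  fixes f :: "real \<Rightarrow> real"
  assumes cont: "continuous_on {0..1} f" and onto: "f ` {0..1} = {0..1}"
    and nosplit: "\<not> admits_splitting f"
    and p: "p \<in> {0..1}" "f p = p" and puniq: "\<forall>x\<in>{0..1}. f x = x \<longrightarrow> x = p"
    and ab: "a < b" "a \<in> {0..1}" "b \<in> {0..1}" "f a = b" "f b = a"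
    and gmin: "\<And>x. 0 \<le> x \<Longrightarrow> x < a \<Longrightarrow> f (f x) \<noteq> x"
    and q: "q \<in> inv_lim f" and qa: "\<forall>N. \<exists>n\<ge>N. q n = a" and qb: "\<forall>N. \<exists>n\<ge>N. q n = b"
  shows "endpoint (inv_lim f) q"
proof -
  have pmax: "\<forall>x\<in>{0..1}. f x = x \<longrightarrow> x \<le> p" using puniq by auto
  have pmin: "\<forall>x\<in>{0..1}. f x = x \<longrightarrow> p \<le> x" using puniq by auto
  have infM: "infinite {n. q n = c}" if "\<forall>N. \<exists>n\<ge>N. q n = c" for c
    unfolding infinite_nat_iff_unbounded_le using that by blast
  have infMS: "infinite {n. q (Suc n) = c}" if qc: "\<forall>N. \<exists>n\<ge>N. q n = c" for c
    unfolding infinite_nat_iff_unbounded_le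
  proof
    fix m
    obtain n where n: "Suc m \<le> n" "q n = c" using qc by blast
    then have "q (Suc (n - 1)) = c" by simp
    then show "\<exists>n'\<ge>m. n' \<in> {n. q (Suc n) = c}" using n(1) by (intro exI[of _ "n - 1"]) auto
  qed
  have qin: "q n \<in> proj A n" if "q \<in> A" for A n using that unfolding proj_def by simp
  show ?thesis
  proof (cases "a = 0")
    case True
    show ?thesis
    proof (rule endpoint_crit[OF q, of 0 "{n. q n = a}"])
      show "infinite {n. q n = a}" by (rule infM[OF qa])
      fix A assume A: "subcontinuum A (inv_lim f)" "q \<in> A"
      have "\<forall>n\<ge>0. n \<in> {n. q n = a} \<longrightarrow> 0 \<in> proj A n"
      proof (intro allI impI)
        fix n :: nat assume "n \<in> {n. q n = a}"
        then have "q n = a" by simp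
        then show "0 \<in> proj A n" using qin[OF A(2), of n] True by simp
      qed
      then show "(\<forall>n. proj A n \<subseteq> {q n}) \<or> (\<exists>N. \<forall>n\<ge>N. n \<in> {n. q n = a} \<longrightarrow> 0 \<in> proj A n)"
        by blast
    qed simp
  next
    case a0: False
    show ?thesis
    proof (cases "b = 1")
      case True
      show ?thesis
      proof (rule endpoint_crit[OF q, of 1 "{n. q n = b}"])
        show "infinite {n. q n = b}" by (rule infM[OF qb])
        fix A assume A: "subcontinuum A (inv_lim f)" "q \<in> A"
        have "\<forall>n\<ge>0. n \<in> {n. q n = b} \<longrightarrow> 1 \<in> proj A n"
      proof (intro allI impI)
        fix n :: nat assume "n \<in> {n. q n = b}"
        then have "q n = b" by simp
        then show "1 \<in> proj A n" using qin[OF A(2), of n] True by simp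
      qed
        then show "(\<forall>n. proj A n \<subseteq> {q n}) \<or> (\<exists>N. \<forall>n\<ge>N. n \<in> {n. q n = b} \<longrightarrow> 1 \<in> proj A n)"
          by blast
      qed simp
    next
      case b1: False
      have a0': "0 < a" using a0 ab by simp
      have b1': "b < 1" using b1 ab by simp
      have ap: "a < p"
      proof (rule ccontr)
        assume "\<not> a < p"
        moreover have "a \<noteq> p" using ab p by auto
        ultimately have pa: "p < a" by simp
        have "f a < a" by (rule right_of_fix[OF cont onto p pmax pa]) (use ab in simp)
        then show False using ab by simp
      qed
      obtain u where u: "u \<in> {0..1}" "f u = 1" using onto by (metis atLeastAtMost_iff image_iff order_refl zero_le_one)
      obtain z where z: "z \<in> {0..1}" "f z = 0" using onto by (metis atLeastAtMost_iff image_iff order_refl zero_le_one)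
      have pz: "p < z"
      proof (rule ccontr)
        assume "\<not> p < z"
        moreover have "z \<noteq> p" using z p ap a0' by auto
        ultimately have zp: "z < p" by simp
        have "z < f z" by (rule left_of_fix[OF cont onto p pmin _ zp]) (use z in simp)
        then show False using z by simp
      qed
      show ?thesis
      proof (cases "\<exists>u'\<in>{0..1}. f u' = 1 \<and> a \<le> u'")
        case True
        then obtain u' where u': "u' \<in> {0..1}" "f u' = 1" "a \<le> u'" by blast
        define w where "w = min u' z"
        have wa: "a \<le> w" using u' pz ap by (simp add: w_def)
        have fw: "f w = 0 \<or> f w = 1" using u' z by (auto simp: w_def min_def)
        have W: "{0..1} \<subseteq> f ` {y..1}" if y: "0 \<le> y" "y \<le> w" for y
        proof -
          have ct: "continuous_on {y..1} f" by (rule continuous_on_subset[OF cont]) (use y in auto)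
          have "{f z..f u'} \<subseteq> f ` {y..1}" by (rule cover_pts[OF ct]) (use y u' z in \<open>auto simp: w_def\<close>)
          then show ?thesis using u' z by simp
        qed
        show ?thesis
        proof (rule endpoint_crit[OF q fw, of "{n. q (Suc n) = a}"])
          show "infinite {n. q (Suc n) = a}" by (rule infMS[OF qa])
          fix A assume A: "subcontinuum A (inv_lim f)" "q \<in> A"
          have "0 \<le> w" using wa ab by simp
          from good_right[of f A q w, OF cont onto nosplit A(1) A(2) this W] wa
          show "(\<forall>n. proj A n \<subseteq> {q n}) \<or> (\<exists>N. \<forall>n\<ge>N. n \<in> {n. q (Suc n) = a} \<longrightarrow> f w \<in> proj A n)"
            by auto
        qed
      next
        case False
        then have ua: "u < a" using u by force
        have zb: "z < b"
        proof (rule ccontr)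
          assume "\<not> z < b"
          moreover have "z \<noteq> b" using z ab a0' by auto
          ultimately have bz: "b < z" by simp
          have ct: "continuous_on {u..a} f" by (rule continuous_on_subset[OF cont]) (use u ab in auto)
          obtain w0 where w0: "u \<le> w0" "w0 \<le> a" "f w0 = z"
            using IVT2'[of f a z u, OF _ _ _ ct] ab bz u z ua by auto
          have "w0 \<noteq> a" using w0 ab bz by auto
          then have w0a: "w0 < a" using w0 by simp
          have "f (f w0) \<le> w0" using w0 z u by simp
          then obtain x where x: "0 \<le> x" "x \<le> w0" "f (f x) = x"
            using ff_fix[OF cont onto, of w0] w0 u ab by auto
          then show False using gmin[of x] w0a by simp
        qed
        define w where "w = max u z"
        have wb: "w \<le> b" using ua zb ab by (simp add: w_def)
        have fw: "f w = 0 \<or> f w = 1" using u z by (auto simp: w_def max_def)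
        have W: "{0..1} \<subseteq> f ` {0..y}" if y: "w \<le> y" "y \<le> 1" for y
        proof -
          have ct: "continuous_on {0..y} f" by (rule continuous_on_subset[OF cont]) (use y in auto)
          have "{f z..f u} \<subseteq> f ` {0..y}" by (rule cover_pts[OF ct]) (use y u z in \<open>auto simp: w_def\<close>)
          then show ?thesis using u z by simp
        qed
        show ?thesis
        proof (rule endpoint_crit[OF q fw, of "{n. q (Suc n) = b}"])
          show "infinite {n. q (Suc n) = b}" by (rule infMS[OF qb])
          fix A assume A: "subcontinuum A (inv_lim f)" "q \<in> A"
          have "w \<le> 1" using wb ab by simp
          from good_left[of f A q w, OF cont onto nosplit A(1) A(2) this W] wb
          show "(\<forall>n. proj A n \<subseteq> {q n}) \<or> (\<exists>N. \<forall>n\<ge>N. n \<in> {n. q (Suc n) = b} \<longrightarrow> f w \<in> proj A n)"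
            by auto
        qed
      qed
    qed
  qed
qed

lemma alt_in_inv_lim:
  assumes "two_cycle f s t"
  shows "(\<lambda>n. if even n then s else t) \<in> inv_lim f"
  using assms unfolding inv_lim_def two_cycle_def by auto

lemma alt_often:
  shows "\<forall>N. \<exists>n\<ge>N. (\<lambda>n::nat. if even n then s else t) n = s"
    and "\<forall>N. \<exists>n\<ge>N. (\<lambda>n::nat. if even n then s else t) n = t"
proof -
  show "\<forall>N. \<exists>n\<ge>N. (\<lambda>n::nat. if even n then s else t) n = s"
  proof
    fix N :: nat show "\<exists>n\<ge>N. (\<lambda>n::nat. if even n then s else t) n = s"
      by (rule exI[of _ "2 * N"]) simp
  qed
  show "\<forall>N. \<exists>n\<ge>N. (\<lambda>n::nat. if even n then s else t) n = t"
  proof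
    fix N :: nat show "\<exists>n\<ge>N. (\<lambda>n::nat. if even n then s else t) n = t"
      by (rule exI[of _ "2 * N + 1"]) simp
  qed
qed

theorem proposition3p19:
  fixes f :: "real \<Rightarrow> real"
  assumes cont: "continuous_on {0..1} f"
    and onto: "f ` {0..1} = {0..1}"
    and nosplit: "\<not> admits_splitting f"
  shows "((\<exists>x\<in>{0..1}. \<exists>y\<in>{0..1}. x \<noteq> y \<and> f x = x \<and> f y = y) \<and>
          (\<forall>d e. d \<in> {0..1} \<and> f d = d \<and> (\<forall>x\<in>{0..1}. f x = x \<longrightarrow> x \<le> d) \<and>
                 e \<in> {0..1} \<and> f e = e \<and> (\<forall>x\<in>{0..1}. f x = x \<longrightarrow> e \<le> x) \<longrightarrow>
                 endpoint (inv_lim f) (\<lambda>n. d) \<and> endpoint (inv_lim f) (\<lambda>n. e)))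
       \<or>
         ((\<exists>s t. two_cycle f s t) \<and>
          (\<forall>s t. two_cycle f s t \<and>
                 (\<forall>u v. two_cycle f u v \<and> {u, v} \<noteq> {s, t} \<longrightarrow> s < u) \<longrightarrow>
                 endpoint (inv_lim f) (\<lambda>n. if even n then s else t) \<and>
                 endpoint (inv_lim f) (\<lambda>n. if even n then t else s)))"
proof (cases "\<exists>x\<in>{0..1}. \<exists>y\<in>{0..1}. x \<noteq> y \<and> f x = x \<and> f y = y")
  case True
  then obtain x y where xy: "x \<in> {0..1}" "y \<in> {0..1}" "x \<noteq> y" "f x = x" "f y = y" by blast
  have "\<forall>d e. d \<in> {0..1} \<and> f d = d \<and> (\<forall>x\<in>{0..1}. f x = x \<longrightarrow> x \<le> d) \<and>
                 e \<in> {0..1} \<and> f e = e \<and> (\<forall>x\<in>{0..1}. f x = x \<longrightarrow> e \<le> x) \<longrightarrow>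
                 endpoint (inv_lim f) (\<lambda>n. d) \<and> endpoint (inv_lim f) (\<lambda>n. e)"
  proof (intro allI impI)
    fix d e
    assume H: "d \<in> {0..1} \<and> f d = d \<and> (\<forall>x\<in>{0..1}. f x = x \<longrightarrow> x \<le> d) \<and>
                 e \<in> {0..1} \<and> f e = e \<and> (\<forall>x\<in>{0..1}. f x = x \<longrightarrow> e \<le> x)"
    then have d: "d \<in> {0..1}" "f d = d" and dmax: "\<forall>x\<in>{0..1}. f x = x \<longrightarrow> x \<le> d"
      and e: "e \<in> {0..1}" "f e = e" and emin: "\<forall>x\<in>{0..1}. f x = x \<longrightarrow> e \<le> x" by auto
    obtain e0 where e0: "e0 \<in> {0..1}" "f e0 = e0" "e0 \<noteq> d"
      using xy by (cases "x = d") auto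
    obtain d0 where d0: "d0 \<in> {0..1}" "f d0 = d0" "d0 \<noteq> e"
      using xy by (cases "x = e") auto
    show "endpoint (inv_lim f) (\<lambda>n. d) \<and> endpoint (inv_lim f) (\<lambda>n. e)"
      using endpoint_max[OF cont onto nosplit d dmax e0] endpoint_min[OF cont onto nosplit e emin d0]
      by simp
  qed
  then show ?thesis using True by blast
next
  case False
  have h1: "(\<lambda>x. f x - x) 1 \<le> 0" "0 \<le> (\<lambda>x. f x - x) 0" using onto by auto
  have hc: "continuous_on {0..1} (\<lambda>x. f x - x)" by (intro continuous_intros cont)
  obtain p where p0: "0 \<le> p" "p \<le> 1" "f p - p = 0"
    using IVT2'[of "\<lambda>x. f x - x" 1 0 0, OF h1 _ hc] by auto
  have p: "p \<in> {0..1}" "f p = p" using p0 by auto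
  have puniq: "\<forall>x\<in>{0..1}. f x = x \<longrightarrow> x = p" using False p by blast
  have pmax: "\<forall>x\<in>{0..1}. f x = x \<longrightarrow> x \<le> p" using puniq by auto
  have pmin: "\<forall>x\<in>{0..1}. f x = x \<longrightarrow> p \<le> x" using puniq by auto
  obtain u where u: "u \<in> {0..1}" "f u = 1" using onto by (metis atLeastAtMost_iff image_iff order_refl zero_le_one)
  obtain z where z: "z \<in> {0..1}" "f z = 0" using onto by (metis atLeastAtMost_iff image_iff order_refl zero_le_one)
  have up: "u \<le> p"
  proof (rule ccontr)
    assume "\<not> u \<le> p"
    then have pu: "p < u" by simp
    have "f u < u" by (rule right_of_fix[OF cont onto p pmax pu]) (use u in simp)
    then show False using u by simp
  qed
  have zp: "p \<le> z"
  proof (rule ccontr)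
    assume "\<not> p \<le> z"
    then have zp: "z < p" by simp
    have "z < f z" by (rule left_of_fix[OF cont onto p pmin _ zp]) (use z in simp)
    then show False using z by simp
  qed
  have up': "u < p"
  proof (rule ccontr)
    assume "\<not> u < p"
    then have "u = p" using up by simp
    then have "p = 1" using u p by simp
    then have "z = 1" using zp z by simp
    then show False using z p \<open>p = 1\<close> by simp
  qed
  have zp': "p < z"
  proof (rule ccontr)
    assume "\<not> p < z"
    then have "z = p" using zp by simp
    then have "p = 0" using z p by simp
    then show False using up' u by simp
  qed
  have ex2: "\<exists>s t. two_cycle f s t"
  proof -
    have ct: "continuous_on {u..p} f" by (rule continuous_on_subset[OF cont]) (use u p in auto)
    obtain c where c: "u \<le> c" "c \<le> p" "f c = z"
      using IVT2'[of f p z u, OF _ _ _ ct] p zp' u z up' by auto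
    have "c \<noteq> p" using c p zp' by auto
    then have cp: "c < p" using c by simp
    have "f (f c) \<le> c" using c z u by simp
    then obtain x where x: "0 \<le> x" "x \<le> c" "f (f x) = x"
      using ff_fix[OF cont onto, of c] c u p by auto
    have x1: "x \<in> {0..1}" using x cp p by auto
    have fx1: "f x \<in> {0..1}" using x1 onto by auto
    have "f x \<noteq> x" using puniq x1 x cp by auto
    then have "two_cycle f x (f x)" unfolding two_cycle_def using x1 fx1 x by auto
    then show ?thesis by blast
  qed
  have ends: "endpoint (inv_lim f) (\<lambda>n. if even n then s else t) \<and>
                 endpoint (inv_lim f) (\<lambda>n. if even n then t else s)"
    if H: "two_cycle f s t \<and> (\<forall>u v. two_cycle f u v \<and> {u, v} \<noteq> {s, t} \<longrightarrow> s < u)" for s t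
  proof -
    have st: "two_cycle f s t" and smin: "\<And>u v. two_cycle f u v \<Longrightarrow> {u, v} \<noteq> {s, t} \<Longrightarrow> s < u"
      using H by auto
    have ts: "two_cycle f t s" using st unfolding two_cycle_def by auto
    have st1: "s \<in> {0..1}" "t \<in> {0..1}" "s \<noteq> t" "f s = t" "f t = s" using st unfolding two_cycle_def by auto
    define a where "a = min s t"
    define b where "b = max s t"
    have ab: "a < b" "a \<in> {0..1}" "b \<in> {0..1}" "f a = b" "f b = a"
      using st1 by (auto simp: a_def b_def min_def max_def)
    have ap: "a < p"
    proof (rule ccontr)
      assume "\<not> a < p"
      moreover have "a \<noteq> p" using ab p by auto
      ultimately have pa: "p < a" by simp
      have "f a < a" by (rule right_of_fix[OF cont onto p pmax pa]) (use ab in simp)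
      then show False using ab by simp
    qed
    have gmin: "f (f x) \<noteq> x" if x: "0 \<le> x" "x < a" for x
    proof
      assume ffx: "f (f x) = x"
      have x1: "x \<in> {0..1}" using x ab by auto
      show False
      proof (cases "f x = x")
        case True
        then have "x = p" using puniq x1 by auto
        then show ?thesis using x ap by simp
      next
        case False
        have fx1: "f x \<in> {0..1}" using x1 onto by auto
        have tc: "two_cycle f x (f x)" unfolding two_cycle_def using x1 fx1 ffx False by auto
        have "x \<noteq> s" "x \<noteq> t" using x by (auto simp: a_def)
        then have "{x, f x} \<noteq> {s, t}" by auto
        then have "s < x" using smin[OF tc] by simp
        then show ?thesis using x by (simp add: a_def)
      qed
    qed
    have abst: "(a = s \<and> b = t) \<or> (a = t \<and> b = s)" by (auto simp: a_def b_def min_def max_def)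
    have E: "endpoint (inv_lim f) q"
      if q: "q \<in> inv_lim f" and qs: "\<forall>N. \<exists>n\<ge>N. q n = s" and qt: "\<forall>N. \<exists>n\<ge>N. q n = t" for q
    proof -
      have qa: "\<forall>N. \<exists>n\<ge>N. q n = a" and qb: "\<forall>N. \<exists>n\<ge>N. q n = b"
        using abst qs qt by auto
      show ?thesis by (rule endpoint_cycle[OF cont onto nosplit p puniq ab gmin q qa qb])
    qed
    have q1: "(\<lambda>n. if even n then s else t) \<in> inv_lim f" by (rule alt_in_inv_lim[OF st])
    have q2: "(\<lambda>n. if even n then t else s) \<in> inv_lim f" by (rule alt_in_inv_lim[OF ts])
    show ?thesis
      using E[OF q1 alt_often(1) alt_often(2)] E[OF q2 alt_often(2) alt_often(1)] by simp
  qed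
  show ?thesis using ex2 ends by blast
qed

end
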